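(* Let $L$ be a finite lattice with exactly two coatoms and $U$ a finite lattice with exactly two atoms. Then any vertical 2-sum $L +_2 U$ of $L$ and $U$ is a lattice.
   Context: Let $L' = L \setminus \{\top_L\}$ and $U' = U \setminus \{\bot_U\}$, where $\top_L$ is the top of $L$ and $\bot_U$ the bottom of $U$. A vertical 2-sum $L +_2 U$ is the poset obtained from the disjoint union of $L'$ and $U'$ by identifying the two coatoms of $L$ with the two atoms of $U$ via some bijection; the order is the one generated by the orders of $L'$ and $U'$, i.e. $x \le y$ iff $x,y \in L'$ and $x \le_L y$, or $x,y \in U'$ and $x \le_U y$, or $x \in L'$, $y \in U'$ and there is an identified element $c$ with $x \le_L c$ and $c \le_U y$. *)

theory Defs
  imports Main "HOL-Algebra.Lattice"
begin

definition coatom :: "'a::bounded_lattice \<Rightarrow> bool" where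
  "coatom c \<longleftrightarrow> c < Orderings.top \<and> \<not> (\<exists>x. c < x \<and> x < Orderings.top)"

definition atom :: "'b::bounded_lattice \<Rightarrow> bool" where
  "atom a \<longleftrightarrow> Orderings.bot < a \<and> \<not> (\<exists>x. Orderings.bot < x \<and> x < a)"

text \<open>Elements live in the type 'a + 'b:
  L' = L - {top} is represented by Inl, U' = U - {bot} is represented by Inr,
  except that the atoms of U are identified with the coatoms of L via the
  bijection f (an atom f c of U is represented by Inl c).\<close>

definition v2sum_carrier :: "('a::bounded_lattice \<Rightarrow> 'b::bounded_lattice) \<Rightarrow> ('a + 'b) set" where
  "v2sum_carrier f = Inl ` {a. a \<noteq> Orderings.top} \<union> Inr ` {u. u \<noteq> Orderings.bot \<and> \<not> atom u}"

fun lpart :: "('a + 'b) \<Rightarrow> 'a option" where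
  "lpart (Inl a) = Some a"
| "lpart (Inr u) = None"

fun upart :: "('a::bounded_lattice \<Rightarrow> 'b) \<Rightarrow> ('a + 'b) \<Rightarrow> 'b option" where
  "upart f (Inl a) = (if coatom a then Some (f a) else None)"
| "upart f (Inr u) = Some u"

definition v2sum_le :: "('a::bounded_lattice \<Rightarrow> 'b::bounded_lattice) \<Rightarrow> ('a + 'b) \<Rightarrow> ('a + 'b) \<Rightarrow> bool" where
  "v2sum_le f x y \<longleftrightarrow>
     (\<exists>a b. lpart x = Some a \<and> lpart y = Some b \<and> a \<le> b)
   \<or> (\<exists>u v. upart f x = Some u \<and> upart f y = Some v \<and> u \<le> v)
   \<or> (\<exists>a v c. lpart x = Some a \<and> upart f y = Some v \<and> coatom c \<and> a \<le> c \<and> f c \<le> v)"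

definition vertical_2sum :: "('a::bounded_lattice \<Rightarrow> 'b::bounded_lattice) \<Rightarrow> ('a + 'b) gorder" where
  "vertical_2sum f = \<lparr>carrier = v2sum_carrier f, eq = (=), le = v2sum_le f\<rparr>"

end

theory Submission
  imports Defs
begin

lemma ex_coatom:
  fixes a :: "'a::{finite,bounded_lattice}"
  assumes "a \<noteq> Orderings.top"
  shows "\<exists>c. coatom c \<and> a \<le> c"
proof -
  let ?A = "{x. a \<le> x \<and> x \<noteq> Orderings.top}"
  have "a \<in> ?A" using assms by simp
  then obtain m where m: "m \<in> ?A" "a \<le> m" "\<forall>b \<in> ?A. m \<le> b \<longrightarrow> m = b"
    using finite_has_maximal2[OF finite[of ?A] \<open>a \<in> ?A\<close>] by blast
  have "coatom m" unfolding coatom_def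
  proof (intro conjI notI)
    show "m < Orderings.top" using m(1) top.not_eq_extremum by blast
  next
    assume "\<exists>x. m < x \<and> x < Orderings.top"
    then obtain x where x: "m < x" "x < Orderings.top" by blast
    have "a \<le> x" using m(2) x(1) by (meson order.trans order.strict_implies_order)
    moreover have "x \<noteq> Orderings.top" using x(2) by (rule order.strict_implies_not_eq)
    ultimately have "x \<in> ?A" by simp
    then have "m = x" using m(3) x(1) order.strict_implies_order by blast
    then show False using x(1) by simp
  qed
  then show ?thesis using m by blast
qed

lemma ex_atom:
  fixes u :: "'b::{finite,bounded_lattice}"
  assumes "u \<noteq> Orderings.bot"
  shows "\<exists>p. atom p \<and> p \<le> u"
proof -
  let ?A = "{x. x \<le> u \<and> x \<noteq> Orderings.bot}"
  have "u \<in> ?A" using assms by simp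
  then obtain m where m: "m \<in> ?A" "m \<le> u" "\<forall>b \<in> ?A. b \<le> m \<longrightarrow> m = b"
    using finite_has_minimal2[OF finite[of ?A] \<open>u \<in> ?A\<close>] by blast
  have "atom m" unfolding atom_def
  proof (intro conjI notI)
    show "Orderings.bot < m" using m(1) bot.not_eq_extremum by blast
  next
    assume "\<exists>x. Orderings.bot < x \<and> x < m"
    then obtain x where x: "Orderings.bot < x" "x < m" by blast
    have "x \<le> u" using m(2) x(2) by (meson order.trans order.strict_implies_order)
    moreover have "x \<noteq> Orderings.bot" using x(1) by (metis order.strict_implies_not_eq)
    ultimately have "x \<in> ?A" by simp
    then have "m = x" using m(3) x(2) order.strict_implies_order by blast
    then show False using x(2) by simp
  qed
  then show ?thesis using m by blast
qed

lemma atom_below: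
  assumes a: "atom p" "u \<le> p"
  shows "u = Orderings.bot \<or> u = p"
proof (rule ccontr)
  assume n: "\<not> (u = Orderings.bot \<or> u = p)"
  have "Orderings.bot \<le> u" by (rule bot_least)
  then have b: "Orderings.bot < u" using n order.not_eq_order_implies_strict by metis
  have c: "u < p" using n a(2) order.not_eq_order_implies_strict by metis
  have "\<not> (\<exists>x. Orderings.bot < x \<and> x < p)" using a(1) unfolding atom_def by (rule conjunct2)
  then show False using b c by blast
qed

lemma atom_nbot: "atom p \<Longrightarrow> p \<noteq> Orderings.bot"
  unfolding atom_def by auto

lemma coatom_ntop: "coatom c \<Longrightarrow> c \<noteq> Orderings.top"
  unfolding coatom_def by auto

lemma above_U:
  fixes u w :: "'b::bounded_lattice"
  assumes a: "u \<noteq> Orderings.bot" "\<not> atom u" "u \<le> w"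
  shows "w \<noteq> Orderings.bot \<and> \<not> atom w"
proof
  show "w \<noteq> Orderings.bot"
  proof
    assume "w = Orderings.bot"
    then have "u \<le> Orderings.bot" using a(3) by simp
    then have "u = Orderings.bot" by (rule le_bot)
    then show False using a(1) by contradiction
  qed
  show "\<not> atom w"
  proof
    assume "atom w"
    then have "u = Orderings.bot \<or> u = w" using a(3) by (rule atom_below)
    then show False using a(1,2) \<open>atom w\<close> by blast
  qed
qed

lemma carrier_simps [simp]:
  "Inl a \<in> v2sum_carrier f \<longleftrightarrow> a \<noteq> Orderings.top"
  "Inr u \<in> v2sum_carrier f \<longleftrightarrow> u \<noteq> Orderings.bot \<and> \<not> atom u"
  unfolding v2sum_carrier_def by (simp_all add: image_iff)

context
  fixes f :: "'a::{finite,bounded_lattice} \<Rightarrow> 'b::{finite,bounded_lattice}" and c1 c2 :: 'a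
  assumes coat: "\<And>c. coatom c \<longleftrightarrow> c = c1 \<or> c = c2"
  and atm: "\<And>p. atom p \<longleftrightarrow> p = f c1 \<or> p = f c2"
  and dist: "c1 \<noteq> c2" "f c1 \<noteq> f c2"
begin

lemma fle: "coatom c \<Longrightarrow> coatom b \<Longrightarrow> f c \<le> f b \<Longrightarrow> c = b"
  using atom_below[of "f b" "f c"] atm coat dist atom_nbot by metis

lemma le_LL [simp]: "v2sum_le f (Inl a) (Inl b) \<longleftrightarrow> a \<le> b"
  unfolding v2sum_le_def using fle by (auto split: if_splits)

lemma le_LR [simp]: "v2sum_le f (Inl a) (Inr v) \<longleftrightarrow> (\<exists>c. coatom c \<and> a \<le> c \<and> f c \<le> v)"
  unfolding v2sum_le_def by (auto split: if_splits)

lemma le_RL: "v \<noteq> Orderings.bot \<Longrightarrow> \<not> atom v \<Longrightarrow> \<not> v2sum_le f (Inr v) (Inl b)"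
  unfolding v2sum_le_def using atom_below atm coat by (auto split: if_splits)

lemma le_RR [simp]: "v2sum_le f (Inr u) (Inr v) \<longleftrightarrow> u \<le> v"
  unfolding v2sum_le_def by auto

lemma le_RL_C: "Inr v \<in> v2sum_carrier f \<Longrightarrow> \<not> v2sum_le f (Inr v) (Inl b)"
  using le_RL by simp

lemma le_refl_C: "x \<in> v2sum_carrier f \<Longrightarrow> v2sum_le f x x"
  by (cases x) simp_all

lemma le_antisym_C:
  assumes "x \<in> v2sum_carrier f" "y \<in> v2sum_carrier f" "v2sum_le f x y" "v2sum_le f y x"
  shows "x = y"
proof (cases x)
  case (Inl a)
  show ?thesis
  proof (cases y)
    case (Inl b) then show ?thesis using assms \<open>x = Inl a\<close> by simp
  next
    case (Inr v) then show ?thesis using assms \<open>x = Inl a\<close> le_RL_C by blast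
  qed
next
  case (Inr u)
  show ?thesis
  proof (cases y)
    case (Inl b) then show ?thesis using assms \<open>x = Inr u\<close> le_RL_C by blast
  next
    case (Inr v) then show ?thesis using assms \<open>x = Inr u\<close> by simp
  qed
qed

lemma le_trans_C:
  assumes "x \<in> v2sum_carrier f" "y \<in> v2sum_carrier f" "z \<in> v2sum_carrier f"
    "v2sum_le f x y" "v2sum_le f y z"
  shows "v2sum_le f x z"
proof (cases x)
  case (Inl a)
  show ?thesis
  proof (cases y)
    case (Inl b)
    show ?thesis
    proof (cases z)
      case (Inl d) then show ?thesis using assms \<open>x = Inl a\<close> \<open>y = Inl b\<close> by simp
    next
      case (Inr w)
      then obtain c where "coatom c" "b \<le> c" "f c \<le> w" using assms \<open>y = Inl b\<close> by auto
      moreover have "a \<le> b" using assms \<open>x = Inl a\<close> \<open>y = Inl b\<close> by simp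
      ultimately show ?thesis using \<open>x = Inl a\<close> Inr by (auto intro: order.trans)
    qed
  next
    case (Inr v)
    show ?thesis
    proof (cases z)
      case (Inl d) then show ?thesis using assms \<open>y = Inr v\<close> le_RL_C by blast
    next
      case (Inr w)
      then obtain c where "coatom c" "a \<le> c" "f c \<le> v" using assms \<open>x = Inl a\<close> \<open>y = Inr v\<close> by auto
      moreover have "v \<le> w" using assms \<open>z = Inr w\<close> \<open>y = Inr v\<close> by simp
      ultimately show ?thesis using \<open>x = Inl a\<close> Inr by (auto intro: order.trans)
    qed
  qed
next
  case (Inr u)
  show ?thesis
  proof (cases y)
    case (Inl b) then show ?thesis using assms \<open>x = Inr u\<close> le_RL_C by blast
  next
    case (Inr v)
    show ?thesis
    proof (cases z)
      case (Inl d) then show ?thesis using assms \<open>y = Inr v\<close> le_RL_C by blast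
    next
      case (Inr w) then show ?thesis using assms \<open>x = Inr u\<close> \<open>y = Inr v\<close> by simp
    qed
  qed
qed

lemma po: "partial_order (vertical_2sum f)"
  by unfold_locales
    (auto simp: vertical_2sum_def intro: le_refl_C le_antisym_C le_trans_C)
lemma coat_cases: "coatom (e::'a) \<Longrightarrow> e = c1 \<or> e = c2"
  using coat by blast

lemma coat_c1: "coatom c1" and coat_c2: "coatom c2"
  using coat by blast+

lemma coat2:
  fixes c c' e :: 'a
  shows "coatom c \<Longrightarrow> coatom c' \<Longrightarrow> coatom e \<Longrightarrow> c \<noteq> c' \<Longrightarrow> e = c \<or> e = c'"
proof -
  assume h: "coatom c" "coatom c'" "coatom e" "c \<noteq> c'"
  have "c = c1 \<or> c = c2" "c' = c1 \<or> c' = c2" "e = c1 \<or> e = c2"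
    using coat_cases h by blast+
  then show "e = c \<or> e = c'" using h(4) by blast
qed

lemma atom_f: "coatom (c::'a) \<Longrightarrow> atom (f c)"
proof -
  assume "coatom c"
  then have "c = c1 \<or> c = c2" by (rule coat_cases)
  then show "atom (f c)" using atm by blast
qed

lemma atom_fE: "atom (p::'b) \<Longrightarrow> \<exists>c. coatom c \<and> p = f c"
proof -
  assume "atom p"
  then have "p = f c1 \<or> p = f c2" using atm by blast
  then show ?thesis using coat_c1 coat_c2 by blast
qed

lemma ub_intro:
  assumes "s \<in> v2sum_carrier f" "v2sum_le f x s" "v2sum_le f y s"
    "\<And>d. d \<noteq> Orderings.top \<Longrightarrow> v2sum_le f x (Inl d) \<Longrightarrow> v2sum_le f y (Inl d) \<Longrightarrow> v2sum_le f s (Inl d)"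
    "\<And>w. w \<noteq> Orderings.bot \<Longrightarrow> \<not> atom w \<Longrightarrow> v2sum_le f x (Inr w) \<Longrightarrow> v2sum_le f y (Inr w) \<Longrightarrow> v2sum_le f s (Inr w)"
  shows "\<exists>s\<in>v2sum_carrier f. v2sum_le f x s \<and> v2sum_le f y s \<and>
     (\<forall>z\<in>v2sum_carrier f. v2sum_le f x z \<longrightarrow> v2sum_le f y z \<longrightarrow> v2sum_le f s z)"
proof (intro bexI[of _ s] conjI ballI impI)
  fix z assume "z \<in> v2sum_carrier f" "v2sum_le f x z" "v2sum_le f y z"
  then show "v2sum_le f s z" using assms(4,5) by (cases z) auto
qed (use assms in auto)

lemma two_atoms_join:
  "Lattices.sup (f c1) (f c2) \<noteq> Orderings.bot \<and> \<not> atom (Lattices.sup (f c1) (f c2))"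
proof
  have n1: "f c1 \<noteq> Orderings.bot" using atm atom_nbot by blast
  show "Lattices.sup (f c1) (f c2) \<noteq> Orderings.bot"
  proof
    assume "Lattices.sup (f c1) (f c2) = Orderings.bot"
    then have "f c1 \<le> Orderings.bot" by (metis sup_ge1)
    then show False using n1 le_bot by blast
  qed
  show "\<not> atom (Lattices.sup (f c1) (f c2))"
  proof
    assume at: "atom (Lattices.sup (f c1) (f c2))"
    have a1: "atom (f c1)" "atom (f c2)" using atm by blast+
    have "f c1 = Lattices.sup (f c1) (f c2)" using atom_below[OF at sup_ge1[of "f c1" "f c2"]] atom_nbot[OF a1(1)] by blast
    moreover have "f c2 = Lattices.sup (f c1) (f c2)" using atom_below[OF at sup_ge2[of "f c2" "f c1"]] atom_nbot[OF a1(2)] by blast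
    ultimately show False using dist(2) by simp
  qed
qed

lemma supLL:
  assumes a: "a \<noteq> Orderings.top" and b: "b \<noteq> Orderings.top"
  shows "\<exists>s\<in>v2sum_carrier f. v2sum_le f (Inl a) s \<and> v2sum_le f (Inl b) s \<and>
     (\<forall>z\<in>v2sum_carrier f. v2sum_le f (Inl a) z \<longrightarrow> v2sum_le f (Inl b) z \<longrightarrow> v2sum_le f s z)"
proof (cases "Lattices.sup a b = Orderings.top")
  case False
  show ?thesis
  proof (rule ub_intro[of "Inl (Lattices.sup a b)"])
    fix w assume "v2sum_le f (Inl a) (Inr w)" "v2sum_le f (Inl b) (Inr w)"
    then obtain c c' where c: "coatom c" "a \<le> c" "f c \<le> w" and c': "coatom c'" "b \<le> c'" "f c' \<le> w"
      by auto
    show "v2sum_le f (Inl (Lattices.sup a b)) (Inr w)"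
    proof (cases "c = c'")
      case True
      then show ?thesis using c c' by auto
    next
      case ne: False
      obtain e where e: "coatom e" "Lattices.sup a b \<le> e" using ex_coatom[OF False] by blast
      then have "e = c \<or> e = c'" using coat2[OF c(1) c'(1) e(1) ne] by blast
      then show ?thesis using e c c' by auto
    qed
  qed (use False in auto)
next
  case True
  show ?thesis
  proof (rule ub_intro[of "Inr (Lattices.sup (f c1) (f c2))"])
    show "Inr (Lattices.sup (f c1) (f c2)) \<in> v2sum_carrier f" using two_atoms_join by simp
    have up: "v2sum_le f (Inl t) (Inr (Lattices.sup (f c1) (f c2)))" if tt: "t \<noteq> Orderings.top" for t
    proof -
      obtain e where e: "coatom e" "t \<le> e" using ex_coatom[OF tt] by blast
      have "e = c1 \<or> e = c2" using e(1) by (rule coat_cases)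
      then have "f e \<le> Lattices.sup (f c1) (f c2)" by auto
      then show ?thesis using e by auto
    qed
    show "v2sum_le f (Inl a) (Inr (Lattices.sup (f c1) (f c2)))" using up[OF a] .
    show "v2sum_le f (Inl b) (Inr (Lattices.sup (f c1) (f c2)))" using up[OF b] .
    fix d assume "d \<noteq> Orderings.top" "v2sum_le f (Inl a) (Inl d)" "v2sum_le f (Inl b) (Inl d)"
    then have "Lattices.sup a b \<le> d" by simp
    then have "d = Orderings.top" using True by (simp add: top_unique)
    then show "v2sum_le f (Inr (Lattices.sup (f c1) (f c2))) (Inl d)" using \<open>d \<noteq> Orderings.top\<close> by simp
  next
    fix w assume "v2sum_le f (Inl a) (Inr w)" "v2sum_le f (Inl b) (Inr w)"
    then obtain c c' where c: "coatom c" "a \<le> c" "f c \<le> w" and c': "coatom c'" "b \<le> c'" "f c' \<le> w"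
      by auto
    have ne: "c \<noteq> c'"
    proof
      assume "c = c'"
      then have "Lattices.sup a b \<le> c" using c c' by simp
      then have "c = Orderings.top" using True by (simp add: top_unique)
      then show False using coatom_ntop[OF c(1)] by simp
    qed
    have "c1 = c \<or> c1 = c'" using coat2[OF c(1) c'(1) coat_c1 ne] .
    then have "f c1 \<le> w" using c c' by auto
    moreover have "c2 = c \<or> c2 = c'" using coat2[OF c(1) c'(1) coat_c2 ne] .
    then have "f c2 \<le> w" using c c' by auto
    ultimately show "v2sum_le f (Inr (Lattices.sup (f c1) (f c2))) (Inr w)" by simp
  qed
qed
lemma supLR:
  assumes a: "a \<noteq> Orderings.top" and v: "v \<noteq> Orderings.bot" "\<not> atom v"
  shows "\<exists>s\<in>v2sum_carrier f. v2sum_le f (Inl a) s \<and> v2sum_le f (Inr v) s \<and>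
     (\<forall>z\<in>v2sum_carrier f. v2sum_le f (Inl a) z \<longrightarrow> v2sum_le f (Inr v) z \<longrightarrow> v2sum_le f s z)"
proof (cases "\<exists>c. coatom c \<and> a \<le> c \<and> f c \<le> v")
  case True
  show ?thesis
  proof (rule ub_intro[of "Inr v"])
    fix d assume "v2sum_le f (Inr v) (Inl d)"
    then show "v2sum_le f (Inr v) (Inl d)" .
  qed (use True v in auto)
next
  case False
  obtain c where c: "coatom c" "a \<le> c" using ex_coatom[OF a] by blast
  obtain p where p: "atom p" "p \<le> v" using ex_atom[OF v(1)] by blast
  obtain d' where d': "coatom d'" "p = f d'" using atom_fE[OF p(1)] by blast
  have nad: "\<not> a \<le> d'" using False d' p by blast
  have cd: "c \<noteq> d'" using nad c by blast
  show ?thesis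
  proof (rule ub_intro[of "Inr (Lattices.sup v (f c))"])
    show "Inr (Lattices.sup v (f c)) \<in> v2sum_carrier f"
      using above_U[OF v sup_ge1[of v "f c"]] by simp
    show "v2sum_le f (Inl a) (Inr (Lattices.sup v (f c)))" using c by auto
    show "v2sum_le f (Inr v) (Inr (Lattices.sup v (f c)))" by simp
    fix d assume "v2sum_le f (Inr v) (Inl d)"
    then show "v2sum_le f (Inr (Lattices.sup v (f c))) (Inl d)" using le_RL v by blast
  next
    fix w assume "v2sum_le f (Inl a) (Inr w)" "v2sum_le f (Inr v) (Inr w)"
    then obtain c' where c': "coatom c'" "a \<le> c'" "f c' \<le> w" and vw: "v \<le> w" by auto
    have "c' \<noteq> d'" using nad c' by blast
    moreover have "c' = c \<or> c' = d'" using coat2[OF c(1) d'(1) c'(1) cd] .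
    ultimately have "c' = c" by blast
    then show "v2sum_le f (Inr (Lattices.sup v (f c))) (Inr w)" using c' vw by simp
  qed
qed

lemma supRR:
  assumes u: "u \<noteq> Orderings.bot" "\<not> atom u" and v: "v \<noteq> Orderings.bot" "\<not> atom v"
  shows "\<exists>s\<in>v2sum_carrier f. v2sum_le f (Inr u) s \<and> v2sum_le f (Inr v) s \<and>
     (\<forall>z\<in>v2sum_carrier f. v2sum_le f (Inr u) z \<longrightarrow> v2sum_le f (Inr v) z \<longrightarrow> v2sum_le f s z)"
proof (rule ub_intro[of "Inr (Lattices.sup u v)"])
  show "Inr (Lattices.sup u v) \<in> v2sum_carrier f"
    using above_U[OF u sup_ge1[of u v]] by simp
  fix d assume "v2sum_le f (Inr u) (Inl d)"
  then show "v2sum_le f (Inr (Lattices.sup u v)) (Inl d)" using le_RL u by blast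
qed auto

lemma sup_ex:
  assumes "x \<in> v2sum_carrier f" "y \<in> v2sum_carrier f"
  shows "\<exists>s\<in>v2sum_carrier f. v2sum_le f x s \<and> v2sum_le f y s \<and>
     (\<forall>z\<in>v2sum_carrier f. v2sum_le f x z \<longrightarrow> v2sum_le f y z \<longrightarrow> v2sum_le f s z)"
proof (cases x)
  case (Inl a)
  show ?thesis
  proof (cases y)
    case (Inl b) then show ?thesis using supLL assms \<open>x = Inl a\<close> by simp
  next
    case (Inr v) then show ?thesis using supLR assms \<open>x = Inl a\<close> by simp
  qed
next
  case (Inr u)
  show ?thesis
  proof (cases y)
    case (Inl b)
    then obtain s where "s\<in>v2sum_carrier f" "v2sum_le f y s" "v2sum_le f x s"
      "\<forall>z\<in>v2sum_carrier f. v2sum_le f y z \<longrightarrow> v2sum_le f x z \<longrightarrow> v2sum_le f s z"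
      using supLR[of b u] assms \<open>x = Inr u\<close> by auto
    then show ?thesis by blast
  next
    case (Inr v) then show ?thesis using supRR assms \<open>x = Inr u\<close> by simp
  qed
qed
lemma bot_ne_top: "(Orderings.bot::'a) \<noteq> Orderings.top"
proof
  assume h: "(Orderings.bot::'a) = Orderings.top"
  have "Orderings.bot \<le> c1" by (rule bot_least)
  then have "Orderings.top \<le> c1" using h by simp
  then have "c1 = Orderings.top" by (simp add: top_unique)
  then show False using coatom_ntop[OF coat_c1] by simp
qed

lemma bot_le_C: "x \<in> v2sum_carrier f \<Longrightarrow> v2sum_le f (Inl Orderings.bot) x"
proof (cases x)
  case (Inr w)
  assume "x \<in> v2sum_carrier f"
  then have "w \<noteq> Orderings.bot" using Inr by simp
  then obtain p where p: "atom p" "p \<le> w" using ex_atom by blast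
  obtain e where "coatom e" "p = f e" using atom_fE[OF p(1)] by blast
  then show ?thesis using Inr p by auto
qed simp

lemma lat: "lattice (vertical_2sum f)"
proof -
  let ?G = "vertical_2sum f"
  have po: "partial_order ?G" by (rule po)
  have car: "carrier ?G = v2sum_carrier f" by (simp add: vertical_2sum_def)
  have le: "\<And>x y. (x \<sqsubseteq>\<^bsub>?G\<^esub> y) = v2sum_le f x y" by (simp add: vertical_2sum_def)
  have sup: "\<exists>s. least ?G s (Upper ?G {x,y})" if xy: "x \<in> carrier ?G" "y \<in> carrier ?G" for x y
  proof -
    obtain s where s: "s \<in> v2sum_carrier f" "v2sum_le f x s" "v2sum_le f y s"
      "\<forall>z\<in>v2sum_carrier f. v2sum_le f x z \<longrightarrow> v2sum_le f y z \<longrightarrow> v2sum_le f s z"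
      using sup_ex xy car by blast
    have "least ?G s (Upper ?G {x,y})"
      unfolding least_def Upper_def using s xy by (auto simp: car le)
    then show ?thesis by blast
  qed
  have us: "upper_semilattice ?G"
    by (rule upper_semilattice.intro[OF po]) (unfold upper_semilattice_axioms_def, use sup in blast)
  have inf: "\<exists>s. greatest ?G s (Lower ?G {x,y})" if xy: "x \<in> carrier ?G" "y \<in> carrier ?G" for x y
  proof -
    let ?S = "Lower ?G {x,y}"
    have fin: "finite ?S" by (rule finite)
    have sub: "?S \<subseteq> carrier ?G" by (auto simp: Lower_def)
    have "Inl Orderings.bot \<in> ?S"
      unfolding Lower_def using bot_ne_top bot_le_C by (auto simp: car le)
    then have ne: "?S \<noteq> {}" by blast
    have l: "least ?G (\<Squnion>\<^bsub>?G\<^esub> ?S) (Upper ?G ?S)"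
    proof -
      interpret U: upper_semilattice ?G by (rule us)
      show ?thesis by (rule U.finite_sup_least[OF fin sub ne])
    qed
    define s where "s = \<Squnion>\<^bsub>?G\<^esub> ?S"
    have sU: "s \<in> Upper ?G ?S" and sl: "\<And>u. u \<in> Upper ?G ?S \<Longrightarrow> s \<sqsubseteq>\<^bsub>?G\<^esub> u"
      using l unfolding least_def s_def by auto
    have sc: "s \<in> carrier ?G" using sU by (simp add: Upper_def)
    have "x \<in> Upper ?G ?S" "y \<in> Upper ?G ?S" using xy by (auto simp: Upper_def Lower_def)
    then have "s \<sqsubseteq>\<^bsub>?G\<^esub> x" "s \<sqsubseteq>\<^bsub>?G\<^esub> y" using sl by auto
    then have "s \<in> ?S" using sc by (auto simp: Lower_def)
    moreover have "\<forall>t\<in>?S. t \<sqsubseteq>\<^bsub>?G\<^esub> s" using sU sub unfolding Upper_def by blast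
    ultimately have "greatest ?G s ?S" using sub unfolding greatest_def by blast
    then show ?thesis by blast
  qed
  have ls: "lower_semilattice ?G"
    by (rule lower_semilattice.intro[OF po]) (unfold lower_semilattice_axioms_def, use inf in blast)
  show ?thesis by (rule lattice.intro[OF us ls])
qed

end

theorem lemma3p3:
  fixes f :: "'a::{finite, bounded_lattice} \<Rightarrow> 'b::{finite, bounded_lattice}"
  assumes "card {c::'a. coatom c} = 2"
      and "card {a::'b. atom a} = 2"
      and "bij_betw f {c. coatom c} {a. atom a}"
  shows "lattice (vertical_2sum f)"
proof -
  obtain c1 c2 where K: "{c::'a. coatom c} = {c1, c2}" and d1: "c1 \<noteq> c2"
    using assms(1) card_2_iff by metis
  have coat: "\<And>c. coatom c \<longleftrightarrow> c = c1 \<or> c = c2" using K by blast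
  have im: "f ` {c. coatom c} = {a. atom a}" using assms(3) by (rule bij_betw_imp_surj_on)
  then have A: "{a::'b. atom a} = {f c1, f c2}" using K by simp
  have atm: "\<And>p. atom p \<longleftrightarrow> p = f c1 \<or> p = f c2" using A by blast
  have inj: "inj_on f {c. coatom c}" using assms(3) by (rule bij_betw_imp_inj_on)
  have d2: "f c1 \<noteq> f c2" using inj K d1 unfolding inj_on_def by blast
  show ?thesis by (rule lat[OF coat atm d1 d2])
qed

end
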